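(* For every $p\in(0,1]$ there exists $\alpha>0$ such that for every integer $n\ge1$: if an online algorithm for the $\mathrm{AND}$ instance with $n$ variables reveals at least one of the variables with probability at least $p$, then its expected cost is at least $\alpha\cdot n$.
   Context: The $\mathrm{AND}$ instance with $n$ variables: $f(x)=\bigwedge_{i=1}^n x_i$, input $x$ uniform on $\{0,1\}^n$, costs $(c_1,\dots,c_n)$ a uniformly random permutation of $\{1,\dots,n\}$. Online priced query model: the algorithm (possibly randomized) knows $f$ but not $x$ or $c$; it maintains investments $\theta$ (initially $0$), increasing one coordinate by a positive amount per step; $x_i$ is revealed once $\theta_i\ge c_i$; cost is $\|\theta\|_1$ at halting. Probabilities and expectations are over input, costs, and the algorithm's randomness. *)

theory Defs
  imports "HOL-Probability.Probability"
begin

text \<open>Online priced query model for the AND instance with n variables,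
  indexed 0..n-1.  A deterministic algorithm is a strategy mapping the history
  of its own actions and observations to its next action: None = halt,
  Some (i, d) = increase the investment theta_i by d (must have i < n, d > 0;
  an invalid action is treated as halting).  The observation after a step on
  variable i is Some (x i) if x_i is revealed (theta_i \<ge> c_i), else None.\<close>

type_synonym step = "(nat \<times> real) \<times> bool option"
type_synonym history = "step list"
type_synonym strategy = "history \<Rightarrow> (nat \<times> real) option"

definition invest :: "history \<Rightarrow> nat \<Rightarrow> real" where
  "invest h i = (\<Sum>s\<leftarrow>h. if fst (fst s) = i then snd (fst s) else 0)"

definition spent :: "history \<Rightarrow> real" where
  "spent h = (\<Sum>s\<leftarrow>h. snd (fst s))"

fun hist :: "nat \<Rightarrow> strategy \<Rightarrow> (nat \<Rightarrow> bool) \<Rightarrow> (nat \<Rightarrow> nat) \<Rightarrow> nat \<Rightarrow> history" where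
  "hist n A x c 0 = []"
| "hist n A x c (Suc k) =
     (let h = hist n A x c k in
      case A h of
        None \<Rightarrow> h
      | Some (i, d) \<Rightarrow>
          (if i < n \<and> 0 < d
           then h @ [((i, d), if real (c i) \<le> invest h i + d then Some (x i) else None)]
           else h))"

text \<open>Cost at halting = ||theta||_1 (infinite if the algorithm never halts and spends unboundedly).\<close>
definition run_cost :: "nat \<Rightarrow> strategy \<Rightarrow> (nat \<Rightarrow> bool) \<Rightarrow> (nat \<Rightarrow> nat) \<Rightarrow> ennreal" where
  "run_cost n A x c = (SUP k. ennreal (spent (hist n A x c k)))"

definition reveals :: "nat \<Rightarrow> strategy \<Rightarrow> (nat \<Rightarrow> bool) \<Rightarrow> (nat \<Rightarrow> nat) \<Rightarrow> bool" where
  "reveals n A x c = (\<exists>k. \<exists>i<n. real (c i) \<le> invest (hist n A x c k) i)"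

definition inputs :: "nat \<Rightarrow> (nat \<Rightarrow> bool) set" where
  "inputs n = {x. \<forall>i\<ge>n. x i = False}"

definition costs :: "nat \<Rightarrow> (nat \<Rightarrow> nat) set" where
  "costs n = {c. bij_betw c {..<n} {1..n} \<and> (\<forall>i\<ge>n. c i = 0)}"

definition random_algorithm :: "nat \<Rightarrow> strategy measure \<Rightarrow> bool" where
  "random_algorithm n M \<longleftrightarrow> prob_space M \<and>
     (\<forall>x\<in>inputs n. \<forall>c\<in>costs n.
        {A \<in> space M. reveals n A x c} \<in> sets M \<and>
        (\<lambda>A. run_cost n A x c) \<in> borel_measurable M)"

definition reveal_prob :: "nat \<Rightarrow> strategy measure \<Rightarrow> real" where
  "reveal_prob n M = (\<Sum>x\<in>inputs n. \<Sum>c\<in>costs n. measure M {A \<in> space M. reveals n A x c})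
                       / (real (card (inputs n)) * real (card (costs n)))"

definition expected_cost :: "nat \<Rightarrow> strategy measure \<Rightarrow> ennreal" where
  "expected_cost n M = (\<Sum>x\<in>inputs n. \<Sum>c\<in>costs n. \<integral>\<^sup>+ A. run_cost n A x c \<partial>M)
                       * ennreal (1 / (real (card (inputs n)) * real (card (costs n))))"

end

theory Submission
  imports Defs
begin

fun gh :: "nat \<Rightarrow> strategy \<Rightarrow> nat \<Rightarrow> history" where
  "gh n A 0 = []"
| "gh n A (Suc k) =
     (let h = gh n A k in
      case A h of
        None \<Rightarrow> h
      | Some (i, d) \<Rightarrow> (if i < n \<and> 0 < d then h @ [((i, d), None)] else h))"

definition valid :: "nat \<Rightarrow> history \<Rightarrow> bool" where
  "valid n h = (\<forall>s\<in>set h. fst (fst s) < n \<and> 0 < snd (fst s))"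

lemma invest_append: "invest (h @ t) i = invest h i + invest t i"
  by (simp add: invest_def)

lemma spent_append: "spent (h @ t) = spent h + spent t"
  by (simp add: spent_def)

lemma invest_fst: "map fst h = map fst h' \<Longrightarrow> invest h i = invest h' i"
proof -
  assume a: "map fst h = map fst h'"
  have "\<And>g. invest g i = (\<Sum>a\<leftarrow>map fst g. if fst a = i then snd a else 0)"
    by (simp add: invest_def comp_def)
  thus ?thesis using a by metis
qed

lemma spent_fst: "map fst h = map fst h' \<Longrightarrow> spent h = spent h'"
proof -
  assume a: "map fst h = map fst h'"
  have "\<And>g. spent g = (\<Sum>a\<leftarrow>map fst g. snd a)"
    by (simp add: spent_def comp_def)
  thus ?thesis using a by metis
qed

lemma gh_step: "\<exists>t. gh n A (Suc k) = gh n A k @ t \<and> valid n t"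
  by (auto simp: Let_def valid_def split: option.splits)

lemma gh_mono: "k \<le> k' \<Longrightarrow> \<exists>t. gh n A k' = gh n A k @ t \<and> valid n t"
proof (induction k' rule: dec_induct)
  case base then show ?case by (auto intro: exI[of _ "[]"] simp: valid_def)
next
  case (step m)
  then obtain t where t: "gh n A m = gh n A k @ t" "valid n t" by blast
  obtain u where u: "gh n A (Suc m) = gh n A m @ u" "valid n u" using gh_step by blast
  show ?case using t u by (intro exI[of _ "t @ u"]) (auto simp: valid_def)
qed

lemma valid_gh: "valid n (gh n A k)"
  using gh_mono[of 0 k n A] by auto

lemma invest_nonneg: "valid n h \<Longrightarrow> 0 \<le> invest h i"
  unfolding invest_def valid_def by (intro sum_list_nonneg) auto

lemma invest_gh_mono: "k \<le> k' \<Longrightarrow> invest (gh n A k) i \<le> invest (gh n A k') i"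
  using gh_mono[of k k' n A] invest_nonneg by (auto simp: invest_append)

lemma sum_invest: "valid n h \<Longrightarrow> (\<Sum>i<n. invest h i) = spent h"
proof (induction h)
  case Nil then show ?case by (simp add: invest_def spent_def)
next
  case (Cons s h)
  have v: "valid n h" "fst (fst s) < n" using Cons.prems by (auto simp: valid_def)
  have "(\<Sum>i<n. invest (s # h) i) = (\<Sum>i<n. (if fst (fst s) = i then snd (fst s) else 0)) + (\<Sum>i<n. invest h i)"
    by (simp add: invest_def sum.distrib)
  also have "\<dots> = snd (fst s) + spent h" using v Cons.IH by simp
  finally show ?case by (simp add: spent_def)
qed

lemma hist_gh: "(\<forall>j\<le>k. \<forall>i<n. invest (hist n A x c j) i < real (c i)) \<Longrightarrow> hist n A x c k = gh n A k"
proof (induction k)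
  case 0 then show ?case by simp
next
  case (Suc k)
  then have IH: "hist n A x c k = gh n A k" by auto
  show ?case
  proof (cases "A (gh n A k)")
    case None then show ?thesis using IH by (simp add: Let_def)
  next
    case (Some a)
    obtain i d where a: "a = (i, d)" by fastforce
    show ?thesis
    proof (cases "i < n \<and> 0 < d")
      case True
      have "invest (hist n A x c (Suc k)) i < real (c i)" using Suc.prems True by auto
      hence "\<not> real (c i) \<le> invest (gh n A k) i + d"
        using IH Some a True by (simp add: Let_def invest_append invest_def)
      then show ?thesis using IH Some a True by (simp add: Let_def)
    next
      case False then show ?thesis using IH Some a by (simp add: Let_def)
    qed
  qed
qed

lemma hist_gh_fst: "hist n A x c k = gh n A k \<Longrightarrow> map fst (hist n A x c (Suc k)) = map fst (gh n A (Suc k))"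
  by (auto simp: Let_def split: option.splits)

lemma spent_le_run_cost: "ennreal (spent (hist n A x c k)) \<le> run_cost n A x c"
  unfolding run_cost_def by (rule SUP_upper) auto

lemma costs_pos: "c \<in> costs n \<Longrightarrow> i < n \<Longrightarrow> 1 \<le> c i \<and> c i \<le> n"
  unfolding costs_def bij_betw_def by auto

lemma witness:
  assumes c: "c \<in> costs n" and r: "reveals n A x c" and rc: "run_cost n A x c < ennreal B" and B: "0 \<le> B"
  shows "\<exists>k. spent (gh n A k) < B \<and> (\<exists>i<n. real (c i) \<le> invest (gh n A k) i)"
proof -
  define P where "P k = (\<exists>i<n. real (c i) \<le> invest (hist n A x c k) i)" for k
  have ex: "\<exists>k. P k" using r unfolding reveals_def P_def by blast
  define k0 where "k0 = (LEAST k. P k)"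
  have Pk0: "P k0" unfolding k0_def using ex by (metis LeastI)
  have notP: "\<And>j. j < k0 \<Longrightarrow> \<not> P j" unfolding k0_def using not_less_Least by blast
  have "k0 \<noteq> 0"
  proof
    assume "k0 = 0"
    then obtain i where "i < n" "real (c i) \<le> invest [] i" using Pk0 by (auto simp: P_def)
    then show False using costs_pos[OF c] by (force simp: invest_def)
  qed
  then obtain m where m: "k0 = Suc m" by (cases k0) auto
  have "\<forall>j\<le>m. \<forall>i<n. invest (hist n A x c j) i < real (c i)"
    using notP m by (auto simp: P_def not_le)
  hence hm: "hist n A x c m = gh n A m" by (rule hist_gh)
  have f: "map fst (hist n A x c k0) = map fst (gh n A k0)" using hist_gh_fst[OF hm] m by simp
  have "ennreal (spent (hist n A x c k0)) < ennreal B"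
    using spent_le_run_cost[of n A x c k0] rc by (rule le_less_trans)
  hence "spent (hist n A x c k0) < B"
    by (metis B ennreal_le_iff2 ennreal_less_iff leI le_less_trans less_le_not_le linorder_not_le)
  hence "spent (gh n A k0) < B" using spent_fst[OF f] by simp
  moreover have "\<exists>i<n. real (c i) \<le> invest (gh n A k0) i" using Pk0 invest_fst[OF f] by (auto simp: P_def)
  ultimately show ?thesis by blast
qed

lemma swap_costs:
  assumes c: "c \<in> costs n" and j: "j \<in> {1..n}" and j': "j' \<in> {1..n}"
  shows "(\<lambda>v. if v = j then j' else if v = j' then j else v) \<circ> c \<in> costs n"
proof -
  let ?s = "\<lambda>v::nat. if v = j then j' else if v = j' then j else v"
  have bs: "bij_betw ?s {1..n} {1..n}"
    by (rule bij_betw_byWitness[where f'="?s"]) (use j j' in auto)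
  have bc: "bij_betw c {..<n} {1..n}" using c by (simp add: costs_def)
  have "bij_betw (?s \<circ> c) {..<n} {1..n}" using bij_betw_trans[OF bc bs] .
  moreover have "\<forall>i\<ge>n. (?s \<circ> c) i = 0" using c j j' by (auto simp: costs_def)
  ultimately show ?thesis by (simp add: costs_def)
qed

lemma count_eq:
  assumes j: "j \<in> {1..n}" and j': "j' \<in> {1..n}"
  shows "card {c\<in>costs n. c i = j} = card {c\<in>costs n. c i = j'}"
proof -
  let ?s = "\<lambda>v::nat. if v = j then j' else if v = j' then j else v"
  let ?s' = "\<lambda>v::nat. if v = j' then j else if v = j then j' else v"
  have "bij_betw (\<lambda>c. ?s \<circ> c) {c\<in>costs n. c i = j} {c\<in>costs n. c i = j'}"
  proof (rule bij_betw_byWitness[where f'="\<lambda>c. ?s' \<circ> c"])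
    show "\<forall>a\<in>{c \<in> costs n. c i = j}. ?s' \<circ> (?s \<circ> a) = a" by (auto simp: fun_eq_iff)
    show "\<forall>a\<in>{c \<in> costs n. c i = j'}. ?s \<circ> (?s' \<circ> a) = a" by (auto simp: fun_eq_iff)
    show "(\<lambda>c. ?s \<circ> c) ` {c \<in> costs n. c i = j} \<subseteq> {c \<in> costs n. c i = j'}"
      using swap_costs[OF _ j j'] by auto
    have "?s' = (\<lambda>v::nat. if v = j' then j else if v = j then j' else v)" ..
    show "(\<lambda>c. ?s' \<circ> c) ` {c \<in> costs n. c i = j'} \<subseteq> {c \<in> costs n. c i = j}"
      using swap_costs[OF _ j' j] by auto
  qed
  thus ?thesis by (rule bij_betw_same_card)
qed

lemma count_total:
  assumes fin: "finite (costs n)" and i: "i < n"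
  shows "card (costs n) = n * card {c\<in>costs n. c i = 1}"
proof -
  have eq: "costs n = (\<Union>j\<in>{1..n}. {c\<in>costs n. c i = j})"
  proof (rule set_eqI, rule iffI)
    fix c assume c: "c \<in> costs n"
    have "c i \<in> {1..n}" using costs_pos[OF c i] by simp
    then show "c \<in> (\<Union>j\<in>{1..n}. {c\<in>costs n. c i = j})" using c by (intro UN_I[of "c i"]) auto
  qed auto
  have "card (\<Union>j\<in>{1..n}. {c\<in>costs n. c i = j}) = (\<Sum>j\<in>{1..n}. card {c\<in>costs n. c i = j})"
  proof (rule card_UN_disjoint)
    show "finite {1..n}" by simp
    show "\<forall>j\<in>{1..n}. finite {c\<in>costs n. c i = j}" using fin by simp
    show "\<forall>j\<in>{1..n}. \<forall>k\<in>{1..n}. j \<noteq> k \<longrightarrow> {c\<in>costs n. c i = j} \<inter> {c\<in>costs n. c i = k} = {}"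
      by auto
  qed
  also have "\<dots> = (\<Sum>j\<in>{1..n}. card {c\<in>costs n. c i = 1})"
  proof (rule sum.cong)
    fix j assume "j \<in> {1..n}"
    moreover have "(1::nat) \<in> {1..n}" using i by simp
    ultimately show "card {c\<in>costs n. c i = j} = card {c\<in>costs n. c i = 1}" by (rule count_eq)
  qed simp
  finally have 1: "card (\<Union>j\<in>{1..n}. {c\<in>costs n. c i = j}) = n * card {c\<in>costs n. c i = 1}" by simp
  have "card (costs n) = card (\<Union>j\<in>{1..n}. {c\<in>costs n. c i = j})" using eq by (rule arg_cong)
  then show ?thesis using 1 by simp
qed

lemma card_J: assumes "0 \<le> t" shows "real (card {j\<in>{1..n::nat}. real j \<le> t}) \<le> t"
proof -
  have "{j\<in>{1..n::nat}. real j \<le> t} \<subseteq> {1..nat \<lfloor>t\<rfloor>}"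
    using assms by (auto simp: le_nat_floor)
  hence "card {j\<in>{1..n::nat}. real j \<le> t} \<le> card {1..nat \<lfloor>t\<rfloor>}"
    by (intro card_mono) auto
  hence "real (card {j\<in>{1..n::nat}. real j \<le> t}) \<le> real (nat \<lfloor>t\<rfloor>)" by simp
  also have "\<dots> \<le> t" using assms by linarith
  finally show ?thesis .
qed

lemma count_le:
  assumes fin: "finite (costs n)" and i: "i < n" and t: "0 \<le> t"
  shows "real (card {c\<in>costs n. real (c i) \<le> t}) \<le> t * card (costs n) / n"
proof -
  let ?J = "{j\<in>{1..n::nat}. real j \<le> t}"
  have eq: "{c\<in>costs n. real (c i) \<le> t} = (\<Union>j\<in>?J. {c\<in>costs n. c i = j})"
  proof (rule set_eqI, rule iffI)
    fix c assume c: "c \<in> {c\<in>costs n. real (c i) \<le> t}"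
    have "c i \<in> ?J" using costs_pos[of c n i] c i by simp
    then show "c \<in> (\<Union>j\<in>?J. {c\<in>costs n. c i = j})" using c by (intro UN_I[of "c i"]) auto
  qed auto
  have "card (\<Union>j\<in>?J. {c\<in>costs n. c i = j}) = (\<Sum>j\<in>?J. card {c\<in>costs n. c i = j})"
  proof (rule card_UN_disjoint)
    show "finite ?J" by simp
    show "\<forall>j\<in>?J. finite {c\<in>costs n. c i = j}" using fin by simp
    show "\<forall>j\<in>?J. \<forall>k\<in>?J. j \<noteq> k \<longrightarrow> {c\<in>costs n. c i = j} \<inter> {c\<in>costs n. c i = k} = {}"
      by auto
  qed
  also have "\<dots> = (\<Sum>j\<in>?J. card {c\<in>costs n. c i = 1})"
  proof (rule sum.cong)
    fix j assume "j \<in> ?J"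
    hence "j \<in> {1..n}" by simp
    moreover have "(1::nat) \<in> {1..n}" using i by simp
    ultimately show "card {c\<in>costs n. c i = j} = card {c\<in>costs n. c i = 1}" by (rule count_eq)
  qed simp
  finally have 1: "card (\<Union>j\<in>?J. {c\<in>costs n. c i = j}) = card ?J * card {c\<in>costs n. c i = 1}" by simp
  have "card {c\<in>costs n. real (c i) \<le> t} = card (\<Union>j\<in>?J. {c\<in>costs n. c i = j})" using eq by (rule arg_cong)
  hence "real (card {c\<in>costs n. real (c i) \<le> t}) = real (card ?J) * card {c\<in>costs n. c i = 1}"
    using 1 by simp
  also have "\<dots> \<le> t * card {c\<in>costs n. c i = 1}"
    by (rule mult_right_mono) (use card_J[OF t] in auto)
  also have "\<dots> = t * card (costs n) / n"
    using count_total[OF fin i] i by simp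
  finally show ?thesis .
qed

lemma bad_count:
  assumes fin: "finite (costs n)" and B: "0 \<le> B"
  shows "real (card {c\<in>costs n. reveals n A x c \<and> run_cost n A x c < ennreal B}) \<le> B * card (costs n) / n"
proof -
  define S where "S = {c\<in>costs n. reveals n A x c \<and> run_cost n A x c < ennreal B}"
  define Q where "Q c k = (spent (gh n A k) < B \<and> (\<exists>i<n. real (c i) \<le> invest (gh n A k) i))" for c k
  have finS: "finite S" using fin unfolding S_def by simp
  show ?thesis
  proof (cases "S = {}")
    case True
    then show ?thesis using B by (simp add: S_def[symmetric])
  next
    case False
    define kw where "kw c = (SOME k. Q c k)" for c
    have Qkw: "Q c (kw c)" if "c \<in> S" for c
    proof -
      have "\<exists>k. Q c k" using witness[of c n A x B] that B unfolding S_def Q_def by blast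
      then show ?thesis unfolding kw_def by (rule someI_ex)
    qed
    define ks where "ks = Max (kw ` S)"
    have ksin: "ks \<in> kw ` S" unfolding ks_def using finS False by (intro Max_in) auto
    then obtain c0 where "c0 \<in> S" "ks = kw c0" by blast
    hence sp: "spent (gh n A ks) < B" using Qkw unfolding Q_def by blast
    define t where "t i = invest (gh n A ks) i" for i
    have sub: "S \<subseteq> (\<Union>i<n. {c\<in>costs n. real (c i) \<le> t i})"
    proof
      fix c assume c: "c \<in> S"
      then obtain i where i: "i < n" "real (c i) \<le> invest (gh n A (kw c)) i" using Qkw unfolding Q_def by blast
      have "kw c \<le> ks" unfolding ks_def using finS c by (intro Max_ge) auto
      hence "invest (gh n A (kw c)) i \<le> t i" unfolding t_def by (rule invest_gh_mono)
      hence ct: "real (c i) \<le> t i" using i by linarith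
      have cc: "c \<in> costs n" using c unfolding S_def by simp
      show "c \<in> (\<Union>i<n. {c\<in>costs n. real (c i) \<le> t i})" using cc ct i(1) by blast
    qed
    have "card S \<le> card (\<Union>i<n. {c\<in>costs n. real (c i) \<le> t i})"
      by (rule card_mono[OF _ sub]) (use fin in auto)
    also have "\<dots> \<le> (\<Sum>i<n. card {c\<in>costs n. real (c i) \<le> t i})"
      by (rule card_UN_le) simp
    finally have "real (card S) \<le> real (\<Sum>i<n. card {c\<in>costs n. real (c i) \<le> t i})"
      by (simp only: of_nat_le_iff)
    also have "\<dots> = (\<Sum>i<n. real (card {c\<in>costs n. real (c i) \<le> t i}))"
      by (rule of_nat_sum)
    also have "\<dots> \<le> (\<Sum>i<n. t i * card (costs n) / n)"
      by (rule sum_mono, rule count_le[OF fin]) (auto simp: t_def intro: invest_nonneg valid_gh)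
    also have "\<dots> = (\<Sum>i<n. t i) * card (costs n) / n"
      by (simp add: sum_divide_distrib sum_distrib_right)
    also have "(\<Sum>i<n. t i) = spent (gh n A ks)" unfolding t_def by (rule sum_invest[OF valid_gh])
    also have "spent (gh n A ks) * card (costs n) / n \<le> B * card (costs n) / n"
      using sp by (intro divide_right_mono mult_right_mono) auto
    finally show ?thesis unfolding S_def .
  qed
qed

lemma main_bound:
  assumes n: "1 \<le> n" and RA: "random_algorithm n M" and rp: "p \<le> reveal_prob n M" and p: "0 < p"
  shows "ennreal (p^2/4 * real n) \<le> expected_cost n M"
proof -
  interpret prob_space M using RA by (simp add: random_algorithm_def)
  define X where "X = inputs n"
  define C where "C = costs n"
  define NX where "NX = card X"
  define NC where "NC = card C"
  have NXC: "NX > 0 \<and> NC > 0"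
  proof (rule ccontr)
    assume "\<not> (NX > 0 \<and> NC > 0)"
    hence "real NX * real NC = 0" by auto
    hence "reveal_prob n M = 0" unfolding reveal_prob_def NX_def NC_def X_def C_def by simp
    thus False using rp p by simp
  qed
  have finX: "finite X" and finC: "finite C" using NXC card_gt_0_iff unfolding NX_def NC_def by blast+
  define B where "B = p * real n / 2"
  have B0: "0 \<le> B" using p unfolding B_def by simp
  define R where "R x c = {A\<in>space M. reveals n A x c}" for x c
  define D where "D x c = {A\<in>space M. reveals n A x c \<and> run_cost n A x c < ennreal B}" for x c
  have Rs: "R x c \<in> sets M" and rcm: "(\<lambda>A. run_cost n A x c) \<in> borel_measurable M"
    if "x \<in> X" "c \<in> C" for x c
    using RA that unfolding random_algorithm_def R_def X_def C_def by auto
  have Ds: "D x c \<in> sets M" if "x \<in> X" "c \<in> C" for x c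
  proof -
    have "(\<lambda>A. run_cost n A x c) -` {..<ennreal B} \<inter> space M \<in> sets M"
      by (rule measurable_sets[OF rcm[OF that]]) auto
    moreover have "D x c = R x c \<inter> ((\<lambda>A. run_cost n A x c) -` {..<ennreal B} \<inter> space M)"
      unfolding D_def R_def by auto
    ultimately show ?thesis using Rs[OF that] by auto
  qed
  define E where "E = (\<Sum>x\<in>X. \<Sum>c\<in>C. \<integral>\<^sup>+ A. run_cost n A x c \<partial>M)"
  have step1: "ennreal B * emeasure M (R x c) \<le> (\<integral>\<^sup>+ A. run_cost n A x c \<partial>M) + ennreal B * emeasure M (D x c)"
    if xc: "x \<in> X" "c \<in> C" for x c
  proof -
    have "ennreal B * emeasure M (R x c) = (\<integral>\<^sup>+ A. ennreal B * indicator (R x c) A \<partial>M)"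
      using Rs[OF xc] by (simp add: nn_integral_cmult_indicator)
    also have "\<dots> \<le> (\<integral>\<^sup>+ A. run_cost n A x c + ennreal B * indicator (D x c) A \<partial>M)"
    proof (rule nn_integral_mono)
      fix A assume A: "A \<in> space M"
      show "ennreal B * indicator (R x c) A \<le> run_cost n A x c + ennreal B * indicator (D x c) A"
      proof (cases "reveals n A x c")
        case False then show ?thesis using A by (simp add: R_def indicator_def)
      next
        case True
        show ?thesis
        proof (cases "run_cost n A x c < ennreal B")
          case True2: True
          then show ?thesis using A True by (simp add: R_def D_def indicator_def)
        next
          case False
          then show ?thesis using A True by (simp add: R_def D_def indicator_def not_less add_increasing2)
        qed
      qed
    qed
    also have "\<dots> = (\<integral>\<^sup>+ A. run_cost n A x c \<partial>M) + (\<integral>\<^sup>+ A. ennreal B * indicator (D x c) A \<partial>M)"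
      by (rule nn_integral_add) (use rcm[OF xc] Ds[OF xc] in auto)
    also have "(\<integral>\<^sup>+ A. ennreal B * indicator (D x c) A \<partial>M) = ennreal B * emeasure M (D x c)"
      using Ds[OF xc] by (simp add: nn_integral_cmult_indicator)
    finally show ?thesis .
  qed
  have step2: "(\<Sum>c\<in>C. emeasure M (D x c)) \<le> ennreal (B * NC / n)" if x: "x \<in> X" for x
  proof -
    have "(\<Sum>c\<in>C. emeasure M (D x c)) = (\<Sum>c\<in>C. \<integral>\<^sup>+ A. indicator (D x c) A \<partial>M)"
      by (rule sum.cong) (use Ds[OF x] in auto)
    also have "\<dots> = (\<integral>\<^sup>+ A. (\<Sum>c\<in>C. indicator (D x c) A) \<partial>M)"
      by (rule nn_integral_sum[symmetric]) (use Ds[OF x] in auto)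
    also have "\<dots> \<le> (\<integral>\<^sup>+ A. ennreal (B * NC / n) \<partial>M)"
    proof (rule nn_integral_mono)
      fix A assume A: "A \<in> space M"
      let ?P = "{c\<in>C. reveals n A x c \<and> run_cost n A x c < ennreal B}"
      have "(\<Sum>c\<in>C. indicator (D x c) A) = (\<Sum>c\<in>C. (indicator ?P c :: ennreal))"
        by (rule sum.cong) (use A in \<open>auto simp: D_def indicator_def\<close>)
      also have "\<dots> = (\<Sum>c\<in>C. if c \<in> ?P then 1 else 0)" by (intro sum.cong) (auto simp: indicator_def)
      also have "\<dots> = (\<Sum>c\<in>{c\<in>C. c \<in> ?P}. (1::ennreal))" by (rule sum.inter_filter[OF finC, symmetric])
      also have "\<dots> = of_nat (card (C \<inter> ?P))" by (simp add: Int_def)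
      also have "C \<inter> ?P = ?P" by auto
      also have "(of_nat (card ?P) :: ennreal) = ennreal (real (card ?P))"
        by (rule ennreal_of_nat_eq_real_of_nat)
      also have "\<dots> \<le> ennreal (B * NC / n)"
        using bad_count[of n B A x] finC B0 unfolding C_def NC_def by (intro ennreal_leI) auto
      finally show "(\<Sum>c\<in>C. indicator (D x c) A) \<le> ennreal (B * NC / n)" .
    qed
    also have "\<dots> = ennreal (B * NC / n)" by (simp add: emeasure_space_1)
    finally show ?thesis .
  qed
  have sumR: "(\<Sum>x\<in>X. \<Sum>c\<in>C. emeasure M (R x c)) = ennreal (reveal_prob n M * NX * NC)"
  proof -
    have "(\<Sum>x\<in>X. \<Sum>c\<in>C. emeasure M (R x c)) = (\<Sum>x\<in>X. \<Sum>c\<in>C. ennreal (measure M (R x c)))"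
      by (simp add: emeasure_eq_measure)
    also have "\<dots> = ennreal (\<Sum>x\<in>X. \<Sum>c\<in>C. measure M (R x c))"
      by (simp add: sum_nonneg)
    also have "(\<Sum>x\<in>X. \<Sum>c\<in>C. measure M (R x c)) = reveal_prob n M * NX * NC"
      using NXC unfolding reveal_prob_def R_def X_def C_def NX_def NC_def by simp
    finally show ?thesis .
  qed
  have "ennreal B * ennreal (p * NX * NC) \<le> ennreal B * (\<Sum>x\<in>X. \<Sum>c\<in>C. emeasure M (R x c))"
    unfolding sumR using rp NXC by (intro mult_left_mono ennreal_leI mult_right_mono) auto
  also have "\<dots> = (\<Sum>x\<in>X. \<Sum>c\<in>C. ennreal B * emeasure M (R x c))"
    by (simp add: sum_distrib_left)
  also have "\<dots> \<le> (\<Sum>x\<in>X. \<Sum>c\<in>C. (\<integral>\<^sup>+ A. run_cost n A x c \<partial>M) + ennreal B * emeasure M (D x c))"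
    by (intro sum_mono step1)
  also have "\<dots> = E + ennreal B * (\<Sum>x\<in>X. \<Sum>c\<in>C. emeasure M (D x c))"
    by (simp add: E_def sum.distrib sum_distrib_left)
  also have "(\<Sum>x\<in>X. \<Sum>c\<in>C. emeasure M (D x c)) \<le> (\<Sum>x\<in>X. ennreal (B * NC / n))"
    by (intro sum_mono step2)
  also have "(\<Sum>x\<in>X. ennreal (B * NC / n)) = ennreal (NX * (B * NC / n))"
  proof -
    have "(\<Sum>x\<in>X. ennreal (B * NC / n)) = of_nat NX * ennreal (B * NC / n)" by (simp add: NX_def)
    also have "\<dots> = ennreal (real NX) * ennreal (B * NC / n)" by (simp add: ennreal_of_nat_eq_real_of_nat)
    also have "\<dots> = ennreal (NX * (B * NC / n))" by (rule ennreal_mult[symmetric]) (use B0 in auto)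
    finally show ?thesis .
  qed
  finally have main: "ennreal B * ennreal (p * NX * NC) \<le> E + ennreal B * ennreal (NX * (B * NC / n))"
    by (simp add: add_left_mono mult_left_mono)
  define K where "K = p^2/4 * real n * NX * NC"
  have K0: "0 \<le> K" using p unfolding K_def by simp
  have e1: "ennreal B * ennreal (p * NX * NC) = ennreal K + ennreal K"
    using B0 p n K0 by (simp add: ennreal_mult[symmetric] ennreal_plus[symmetric] K_def B_def power2_eq_square del: ennreal_plus)
  have e2: "ennreal B * ennreal (NX * (B * NC / n)) = ennreal K"
    using B0 p n by (simp add: ennreal_mult[symmetric] K_def B_def power2_eq_square)
  have "ennreal K + ennreal K \<le> ennreal K + E" using main unfolding e1 e2 by (simp add: add.commute)
  hence KE: "ennreal K \<le> E" by (simp add: ennreal_add_left_cancel_le)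
  have "expected_cost n M = E * ennreal (1 / (real NX * real NC))"
    unfolding expected_cost_def E_def NX_def NC_def X_def C_def ..
  also have "\<dots> \<ge> ennreal K * ennreal (1 / (real NX * real NC))"
    using KE by (intro mult_right_mono) auto
  also have "ennreal K * ennreal (1 / (real NX * real NC)) = ennreal (p^2/4 * real n)"
    using NXC K0 by (simp add: ennreal_mult[symmetric] K_def)
  finally show ?thesis .
qed

theorem mainTheorem15:
  shows "\<forall>p::real. 0 < p \<and> p \<le> 1 \<longrightarrow>
           (\<exists>\<alpha>::real. \<alpha> > 0 \<and>
              (\<forall>n::nat. n \<ge> 1 \<longrightarrow>
                 (\<forall>M :: strategy measure. random_algorithm n M \<and> reveal_prob n M \<ge> p \<longrightarrow>
                    expected_cost n M \<ge> ennreal (\<alpha> * real n))))"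
proof (intro allI impI)
  fix p :: real assume p: "0 < p \<and> p \<le> 1"
  show "\<exists>\<alpha>::real. \<alpha> > 0 \<and>
              (\<forall>n::nat. n \<ge> 1 \<longrightarrow>
                 (\<forall>M :: strategy measure. random_algorithm n M \<and> reveal_prob n M \<ge> p \<longrightarrow>
                    expected_cost n M \<ge> ennreal (\<alpha> * real n)))"
    using p main_bound[of _ _ p] by (intro exI[of _ "p^2/4"]) auto
qed

end
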